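(* The quantum channel $\Pi(\rho)=\sum_{i=1}^d\langle i|\rho|i\rangle\,\tau_i$ is the unique quantum channel $\mathcal P$ on $S$ that (1) is activity breaking; (2) satisfies $\mathcal P(\mathsf{St}(S))=\mathsf P(S)$; (3) is covariant under the time evolution, i.e. $\mathcal U_t\circ\mathcal P=\mathcal P\circ\mathcal U_t$ for all $t\in\mathbb R$, where $\mathcal U_t(\rho)=e^{-itH}\rho e^{itH}$; and (4) preserves the energy ordering of the eigenstates, i.e. $\mathrm{Tr}[H\mathcal P(|i\rangle\langle i|)]\le\mathrm{Tr}[H\mathcal P(|j\rangle\langle j|)]$ for all $i\le j$.
   Context: $S$ is a $d$-dimensional quantum system with non-degenerate Hamiltonian $H=\sum_i E_i|i\rangle\langle i|$, $E_1<\dots<E_d$. $\mathsf{St}(S)$ is the set of density matrices; $\mathsf P(S)$ is the set of passive states, i.e. states $\sum_ip_i|i\rangle\langle i|$ with $p_1\ge\dots\ge p_d$. A channel is activity breaking if it maps every state into $\mathsf P(S)$. For $j=1,\dots,d$, $\tau_j=\frac1j\sum_{i=1}^j|i\rangle\langle i|$. *)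

theory Defs
  imports "Jordan_Normal_Form.Matrix" "HOL-Library.Complex_Order"
begin

(* All indices are 0-based: the paper's basis vector |i>, i = 1..d, is our index i-1 < d. *)

definition trace :: "complex mat \<Rightarrow> complex" where
  "trace A = (\<Sum>i<dim_row A. A $$ (i,i))"

definition ketbra :: "complex vec \<Rightarrow> complex mat" where
  "ketbra v = mat (dim_vec v) (dim_vec v) (\<lambda>(a,b). v $ a * cnj (v $ b))"

definition proj :: "nat \<Rightarrow> nat \<Rightarrow> complex mat" where
  "proj d i = ketbra (unit_vec d i)"

definition matsum :: "nat \<Rightarrow> ('i \<Rightarrow> complex mat) \<Rightarrow> 'i set \<Rightarrow> complex mat" where
  "matsum d f I = mat d d (\<lambda>(a,b). \<Sum>i\<in>I. f i $$ (a,b))"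

definition hamiltonian :: "nat \<Rightarrow> (nat \<Rightarrow> real) \<Rightarrow> complex mat" where
  "hamiltonian d E = matsum d (\<lambda>i. complex_of_real (E i) \<cdot>\<^sub>m proj d i) {..<d}"

(* e^{-itH} = sum_i e^{-i t E_i} |i><i|  (H is diagonal) *)
definition evol :: "nat \<Rightarrow> (nat \<Rightarrow> real) \<Rightarrow> real \<Rightarrow> complex mat" where
  "evol d E t = matsum d (\<lambda>i. exp (- \<i> * complex_of_real (t * E i)) \<cdot>\<^sub>m proj d i) {..<d}"

definition U_t :: "nat \<Rightarrow> (nat \<Rightarrow> real) \<Rightarrow> real \<Rightarrow> complex mat \<Rightarrow> complex mat" where
  "U_t d E t \<rho> = evol d E t * \<rho> * evol d E (- t)"

definition psd :: "nat \<Rightarrow> complex mat \<Rightarrow> bool" where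
  "psd n M \<longleftrightarrow> M \<in> carrier_mat n n \<and>
     (\<forall>v \<in> carrier_vec n. (0::complex) \<le> (\<Sum>a<n. \<Sum>b<n. cnj (v $ a) * M $$ (a,b) * v $ b))"

definition states :: "nat \<Rightarrow> complex mat set" where
  "states d = {\<rho>. psd d \<rho> \<and> trace \<rho> = 1}"

definition passive_states :: "nat \<Rightarrow> complex mat set" where
  "passive_states d = {\<rho> \<in> states d. (\<forall>a<d. \<forall>b<d. a \<noteq> b \<longrightarrow> \<rho> $$ (a,b) = 0) \<and>
      (\<forall>i j. i \<le> j \<longrightarrow> j < d \<longrightarrow> Re (\<rho> $$ (j,j)) \<le> Re (\<rho> $$ (i,i)))}"

(* block (a,b) (size d x d) of a (k*d) x (k*d) matrix on C^k \<otimes> C^d *)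
definition block :: "nat \<Rightarrow> complex mat \<Rightarrow> nat \<Rightarrow> nat \<Rightarrow> complex mat" where
  "block d M a b = mat d d (\<lambda>(x,y). M $$ (a*d + x, b*d + y))"

(* id_k \<otimes> P *)
definition ampl :: "nat \<Rightarrow> nat \<Rightarrow> (complex mat \<Rightarrow> complex mat) \<Rightarrow> complex mat \<Rightarrow> complex mat" where
  "ampl d k P M = mat (k*d) (k*d)
     (\<lambda>(r,c). P (block d M (r div d) (c div d)) $$ (r mod d, c mod d))"

definition completely_positive :: "nat \<Rightarrow> (complex mat \<Rightarrow> complex mat) \<Rightarrow> bool" where
  "completely_positive d P \<longleftrightarrow> (\<forall>k M. psd (k*d) M \<longrightarrow> psd (k*d) (ampl d k P M))"

definition quantum_channel :: "nat \<Rightarrow> (complex mat \<Rightarrow> complex mat) \<Rightarrow> bool" where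
  "quantum_channel d P \<longleftrightarrow>
     (\<forall>A \<in> carrier_mat d d. P A \<in> carrier_mat d d) \<and>
     (\<forall>A \<in> carrier_mat d d. \<forall>B \<in> carrier_mat d d. P (A + B) = P A + P B) \<and>
     (\<forall>A \<in> carrier_mat d d. \<forall>c. P (c \<cdot>\<^sub>m A) = c \<cdot>\<^sub>m P A) \<and>
     (\<forall>A \<in> carrier_mat d d. trace (P A) = trace A) \<and>
     completely_positive d P"

definition activity_breaking :: "nat \<Rightarrow> (complex mat \<Rightarrow> complex mat) \<Rightarrow> bool" where
  "activity_breaking d P \<longleftrightarrow> (\<forall>\<rho> \<in> states d. P \<rho> \<in> passive_states d)"

(* tau_j = (1/j) sum_{i=1}^j |i><i|, paper index j = our j+1 *)
definition tau :: "nat \<Rightarrow> nat \<Rightarrow> complex mat" where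
  "tau d j = (1 / of_nat (j+1)) \<cdot>\<^sub>m matsum d (proj d) {..j}"

definition Pi_ch :: "nat \<Rightarrow> complex mat \<Rightarrow> complex mat" where
  "Pi_ch d \<rho> = matsum d (\<lambda>i. \<rho> $$ (i,i) \<cdot>\<^sub>m tau d i) {..<d}"

definition characterizing_props :: "nat \<Rightarrow> (nat \<Rightarrow> real) \<Rightarrow> (complex mat \<Rightarrow> complex mat) \<Rightarrow> bool" where
  "characterizing_props d E P \<longleftrightarrow>
     quantum_channel d P \<and>
     activity_breaking d P \<and>
     P ` states d = passive_states d \<and>
     (\<forall>t::real. \<forall>\<rho> \<in> carrier_mat d d. U_t d E t (P \<rho>) = P (U_t d E t \<rho>)) \<and>
     (\<forall>i j. i \<le> j \<longrightarrow> j < d \<longrightarrow>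
        Re (trace (hamiltonian d E * P (proj d i))) \<le> Re (trace (hamiltonian d E * P (proj d j))))"

end

theory Submission imports Defs begin

lemma matsum_carrier[simp]: "matsum d f I \<in> carrier_mat d d"
  by (simp add: matsum_def)
lemma matsum_dim[simp]: "dim_row (matsum d f I) = d" "dim_col (matsum d f I) = d"
  by (simp_all add: matsum_def)
lemma matsum_index: "x < d \<Longrightarrow> y < d \<Longrightarrow> matsum d f I $$ (x,y) = (\<Sum>i\<in>I. f i $$ (x,y))"
  by (simp add: matsum_def)

lemma sum_if_eq2: "finite I \<Longrightarrow> (\<Sum>i\<in>I. if x = i \<and> y = i then f i else 0) = (if x = y \<and> x \<in> I then f x else 0)"
  by (cases "x = y") (auto simp: sum.delta intro!: sum.neutral)
lemma mult_if_one: "(a::complex) * (if P then 1 else 0) = (if P then a else 0)" by simp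

lemma proj_carrier[simp]: "proj d i \<in> carrier_mat d d"
  by (simp add: proj_def ketbra_def)
lemma proj_dim[simp]: "dim_row (proj d i) = d" "dim_col (proj d i) = d"
  by (simp_all add: proj_def ketbra_def)
lemma proj_index: "x < d \<Longrightarrow> y < d \<Longrightarrow> proj d i $$ (x,y) = (if x = i \<and> y = i then 1 else 0)"
  by (simp add: proj_def ketbra_def unit_vec_def)

lemma tau_carrier[simp]: "tau d j \<in> carrier_mat d d"
  by (simp add: tau_def)
lemma tau_dim[simp]: "dim_row (tau d i) = d" "dim_col (tau d i) = d"
  by (simp_all add: tau_def)
lemma tau_index: "x < d \<Longrightarrow> y < d \<Longrightarrow> tau d j $$ (x,y) = (if x = y \<and> x \<le> j then 1 / of_nat (j+1) else 0)"
  by (simp add: tau_def matsum_index proj_index mult_if_one sum_if_eq2)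

lemma Pi_carrier[simp]: "Pi_ch d A \<in> carrier_mat d d"
  by (simp add: Pi_ch_def)
lemma Pi_index: "x < d \<Longrightarrow> y < d \<Longrightarrow> Pi_ch d A $$ (x,y) =
   (if x = y then (\<Sum>i\<in>{x..<d}. A $$ (i,i) / of_nat (i+1)) else 0)"
proof -
  assume xy: "x < d" "y < d"
  have "Pi_ch d A $$ (x,y) = (\<Sum>i<d. A $$ (i,i) * (if x = y \<and> x \<le> i then 1 / of_nat (i+1) else 0))"
    using xy by (simp add: Pi_ch_def matsum_index tau_index)
  also have "\<dots> = (if x = y then (\<Sum>i\<in>{x..<d}. A $$ (i,i) / of_nat (i+1)) else 0)"
  proof (cases "x = y")
    case True
    have "(\<Sum>i<d. A $$ (i,i) * (if x \<le> i then 1 / of_nat (i+1) else 0)) =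
          (\<Sum>i<d. if x \<le> i then A $$ (i,i) / of_nat (i+1) else 0)"
      by (intro sum.cong) auto
    also have "\<dots> = (\<Sum>i\<in>{i\<in>{..<d}. x \<le> i}. A $$ (i,i) / of_nat (i+1))"
      by (rule sum.inter_filter[symmetric]) simp
    also have "{i\<in>{..<d}. x \<le> i} = {x..<d}" by auto
    finally show ?thesis using True by simp
  qed simp
  finally show ?thesis .
qed

lemma ham_index: "x < d \<Longrightarrow> y < d \<Longrightarrow> hamiltonian d E $$ (x,y) = (if x = y then complex_of_real (E x) else 0)"
  by (simp add: hamiltonian_def matsum_index proj_index mult_if_one sum_if_eq2)
lemma ham_carrier[simp]: "hamiltonian d E \<in> carrier_mat d d"
  by (simp add: hamiltonian_def)
lemma evol_index: "x < d \<Longrightarrow> y < d \<Longrightarrow> evol d E t $$ (x,y) = (if x = y then exp (- \<i> * complex_of_real (t * E x)) else 0)"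
  by (simp add: evol_def matsum_index proj_index mult_if_one sum_if_eq2)
lemma evol_carrier[simp]: "evol d E t \<in> carrier_mat d d"
  by (simp add: evol_def)
lemma evol_dim[simp]: "dim_row (evol d E t) = d" "dim_col (evol d E t) = d"
  by (simp_all add: evol_def)
lemma ham_dim[simp]: "dim_row (hamiltonian d E) = d" "dim_col (hamiltonian d E) = d"
  by (simp_all add: hamiltonian_def)
lemma Pi_dim[simp]: "dim_row (Pi_ch d A) = d" "dim_col (Pi_ch d A) = d"
  by (simp_all add: Pi_ch_def)


definition diagm :: "nat \<Rightarrow> complex mat \<Rightarrow> bool" where
  "diagm d A \<longleftrightarrow> (\<forall>x<d. \<forall>y<d. x \<noteq> y \<longrightarrow> A $$ (x,y) = 0)"

lemma mult_diag_left:
  assumes A: "A \<in> carrier_mat d d" and B: "B \<in> carrier_mat d n" and dA: "diagm d A"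
    and xy: "x < d" "y < n"
  shows "(A * B) $$ (x,y) = A $$ (x,x) * B $$ (x,y)"
proof -
  have "(A * B) $$ (x,y) = (\<Sum>k\<in>{0..<d}. A $$ (x,k) * B $$ (k,y))"
    using A B xy by (simp add: index_mult_mat scalar_prod_def)
  also have "\<dots> = (\<Sum>k\<in>{0..<d}. if k = x then A $$ (x,x) * B $$ (x,y) else 0)"
    using dA xy unfolding diagm_def by (intro sum.cong) auto
  also have "\<dots> = A $$ (x,x) * B $$ (x,y)" using xy by (simp add: sum.delta')
  finally show ?thesis .
qed

lemma mult_diag_right:
  assumes A: "A \<in> carrier_mat d d" and B: "B \<in> carrier_mat n d" and dA: "diagm d A"
    and xy: "x < n" "y < d"
  shows "(B * A) $$ (x,y) = B $$ (x,y) * A $$ (y,y)"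
proof -
  have "(B * A) $$ (x,y) = (\<Sum>k\<in>{0..<d}. B $$ (x,k) * A $$ (k,y))"
    using A B xy by (simp add: index_mult_mat scalar_prod_def)
  also have "\<dots> = (\<Sum>k\<in>{0..<d}. if k = y then B $$ (x,y) * A $$ (y,y) else 0)"
    using dA xy unfolding diagm_def by (intro sum.cong) auto
  also have "\<dots> = B $$ (x,y) * A $$ (y,y)" using xy by (simp add: sum.delta')
  finally show ?thesis .
qed

lemma evol_diag: "diagm d (evol d E t)" by (simp add: diagm_def evol_index)
lemma ham_diag: "diagm d (hamiltonian d E)" by (simp add: diagm_def ham_index)
lemma Pi_diag: "diagm d (Pi_ch d A)" by (simp add: diagm_def Pi_index)

lemma U_t_dim[simp]: "dim_row (U_t d E t \<rho>) = d" "dim_col (U_t d E t \<rho>) = d"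
  unfolding U_t_def by (simp_all only: index_mult_mat evol_dim)
lemma U_t_carrier: "U_t d E t \<rho> \<in> carrier_mat d d"
  unfolding carrier_mat_def by (simp only: U_t_dim mem_Collect_eq simp_thms)

lemma U_t_index:
  assumes r: "\<rho> \<in> carrier_mat d d" and xy: "x < d" "y < d"
  shows "U_t d E t \<rho> $$ (x,y) = exp (- \<i> * complex_of_real (t * E x)) * \<rho> $$ (x,y) * exp (\<i> * complex_of_real (t * E y))"
proof -
  have c1: "evol d E t * \<rho> \<in> carrier_mat d d" by (rule mult_carrier_mat[OF evol_carrier r])
  have "U_t d E t \<rho> $$ (x,y) = (evol d E t * \<rho>) $$ (x,y) * evol d E (-t) $$ (y,y)"
    unfolding U_t_def by (rule mult_diag_right[OF evol_carrier c1 evol_diag xy])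
  also have "(evol d E t * \<rho>) $$ (x,y) = evol d E t $$ (x,x) * \<rho> $$ (x,y)"
    by (rule mult_diag_left[OF evol_carrier r evol_diag xy])
  also have "evol d E t $$ (x,x) = exp (- \<i> * complex_of_real (t * E x))"
    using xy(1) by (simp only: evol_index if_True refl)
  also have "evol d E (-t) $$ (y,y) = exp (- \<i> * complex_of_real (- t * E y))"
    using xy(2) by (simp only: evol_index if_True refl)
  also have "- \<i> * complex_of_real (- t * E y) = \<i> * complex_of_real (t * E y)"
    by simp
  finally show ?thesis .
qed

lemma swap3: "(a::complex) * x * b = x * (a * b)" by (simp add: ac_simps)

lemma U_t_diag:
  assumes r: "\<rho> \<in> carrier_mat d d" and dg: "diagm d \<rho>"
  shows "U_t d E t \<rho> = \<rho>"
proof (rule eq_matI)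
  fix i j assume ij0: "i < dim_row \<rho>" "j < dim_col \<rho>"
  have ij: "i < d" "j < d" using ij0 carrier_matD[OF r] by auto
  have e: "U_t d E t \<rho> $$ (i,j) = exp (- \<i> * complex_of_real (t * E i)) * \<rho> $$ (i,j) * exp (\<i> * complex_of_real (t * E j))"
    by (rule U_t_index[OF r ij])
  show "U_t d E t \<rho> $$ (i,j) = \<rho> $$ (i,j)"
  proof (cases "i = j")
    case True
    have "exp (- \<i> * complex_of_real (t * E i)) * exp (\<i> * complex_of_real (t * E i)) = 1"
      using exp_minus_inverse[of "\<i> * complex_of_real (t * E i)"] by (simp only: mult.commute mult_minus_left)
    then show ?thesis unfolding e using True by (simp only: swap3 mult_1_right)
  next
    case False
    then have "\<rho> $$ (i,j) = 0" using dg ij unfolding diagm_def by blast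
    then show ?thesis unfolding e by simp
  qed
qed (insert carrier_matD[OF r], simp_all only: U_t_dim)

lemma trace_diag_mult:
  assumes A: "A \<in> carrier_mat d d" and B: "B \<in> carrier_mat d d" and dA: "diagm d A"
  shows "trace (A * B) = (\<Sum>x<d. A $$ (x,x) * B $$ (x,x))"
proof -
  have "dim_row (A * B) = d" using A by simp
  then show ?thesis unfolding trace_def
    by (intro sum.cong) (auto simp: mult_diag_left[OF A B dA])
qed

lemma psd_diag_nonneg:
  assumes p: "psd d \<rho>" and i: "i < d"
  shows "0 \<le> \<rho> $$ (i,i)"
proof -
  have "0 \<le> (\<Sum>a<d. \<Sum>b<d. cnj (unit_vec d i $ a) * \<rho> $$ (a,b) * unit_vec d i $ b)"
    using p unfolding psd_def by auto
  also have "\<dots> = (\<Sum>a<d. \<Sum>b<d. if a = i \<and> b = i then \<rho> $$ (i,i) else 0)"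
    by (intro sum.cong refl) (auto simp: unit_vec_def)
  also have "\<dots> = (\<Sum>a<d. if a = i then (\<Sum>b<d. if b = i then \<rho> $$ (i,i) else 0) else 0)"
    by (intro sum.cong) auto
  also have "\<dots> = \<rho> $$ (i,i)" using i
    by (simp add: sum.delta')
  finally show ?thesis .
qed

lemma psd_ketbra:
  assumes w: "dim_vec w = d"
  shows "psd d (ketbra w)"
  unfolding psd_def
proof (intro conjI ballI)
  show "ketbra w \<in> carrier_mat d d" using w by (simp add: ketbra_def)
  fix v :: "complex vec" assume v: "v \<in> carrier_vec d"
  define z where "z = (\<Sum>a<d. cnj (v $ a) * w $ a)"
  have "(\<Sum>a<d. \<Sum>b<d. cnj (v $ a) * ketbra w $$ (a,b) * v $ b) =
        (\<Sum>a<d. \<Sum>b<d. (cnj (v $ a) * w $ a) * cnj (cnj (v $ b) * w $ b))"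
    using w by (intro sum.cong refl) (simp add: ketbra_def)
  also have "\<dots> = z * cnj z"
    by (simp add: z_def sum_product cnj_sum)
  finally have eq: "(\<Sum>a<d. \<Sum>b<d. cnj (v $ a) * ketbra w $$ (a,b) * v $ b) = z * cnj z" .
  have "0 \<le> z * cnj z"
    by (simp add: less_eq_complex_def)
  then show "0 \<le> (\<Sum>a<d. \<Sum>b<d. cnj (v $ a) * ketbra w $$ (a,b) * v $ b)" by (simp only: eq)
qed

lemma proj_state: "i < d \<Longrightarrow> proj d i \<in> states d"
proof -
  assume i: "i < d"
  have "psd d (proj d i)" unfolding proj_def by (rule psd_ketbra) simp
  moreover have "trace (proj d i) = (\<Sum>x<d. if x = i then 1 else 0)"
    unfolding trace_def by (intro sum.cong) (auto simp: proj_index)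
  moreover have "(\<Sum>x<d. if x = i then 1 else 0) = (1::complex)" using i by simp
  ultimately show ?thesis unfolding states_def by simp
qed


lemma Pi_add: "A \<in> carrier_mat d d \<Longrightarrow> B \<in> carrier_mat d d \<Longrightarrow> Pi_ch d (A + B) = Pi_ch d A + Pi_ch d B"
  by (rule eq_matI) (auto simp: Pi_index sum.distrib add_divide_distrib)

lemma Pi_smult: "A \<in> carrier_mat d d \<Longrightarrow> Pi_ch d (c \<cdot>\<^sub>m A) = c \<cdot>\<^sub>m Pi_ch d A"
  by (rule eq_matI) (auto simp: Pi_index sum_distrib_left)

lemma tri_sum: "(\<Sum>x<d. \<Sum>i\<in>{x..<d}. f i) = (\<Sum>i<d. of_nat (i+1) * (f i :: complex))"
proof (induction d)
  case 0 then show ?case by simp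
next
  case (Suc d)
  have "(\<Sum>x<Suc d. \<Sum>i\<in>{x..<Suc d}. f i) = (\<Sum>x<d. \<Sum>i\<in>{x..<Suc d}. f i) + f d"
    by simp
  also have "(\<Sum>x<d. \<Sum>i\<in>{x..<Suc d}. f i) = (\<Sum>x<d. (\<Sum>i\<in>{x..<d}. f i) + f d)"
    by (intro sum.cong) auto
  also have "\<dots> = (\<Sum>i<d. of_nat (i+1) * f i) + of_nat d * f d"
    by (simp add: sum.distrib Suc)
  finally show ?case by (simp add: algebra_simps)
qed

lemma trace_Pi: assumes "A \<in> carrier_mat d d" shows "trace (Pi_ch d A) = trace A"
proof -
  have "trace (Pi_ch d A) = (\<Sum>x<d. \<Sum>i\<in>{x..<d}. A $$ (i,i) / of_nat (i+1))"
    unfolding trace_def by (intro sum.cong) (auto simp: Pi_index)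
  also have "\<dots> = (\<Sum>i<d. A $$ (i,i))"
    by (subst tri_sum) (intro sum.cong, auto simp del: of_nat_Suc)
  finally show ?thesis using \<open>A \<in> carrier_mat d d\<close> by (simp add: trace_def)
qed


lemma cnj_mult_self_nonneg: "0 \<le> cnj z * (z::complex)"
  by (simp add: less_eq_complex_def)

lemma nonneg_div_nat: "0 \<le> (z::complex) \<Longrightarrow> 0 \<le> z / of_nat n"
  by (simp add: less_eq_complex_def)

lemma psd_diag:
  assumes D: "D \<in> carrier_mat d d" and dg: "diagm d D" and nn: "\<And>x. x < d \<Longrightarrow> 0 \<le> D $$ (x,x)"
  shows "psd d D"
  unfolding psd_def
proof (intro conjI ballI)
  show "D \<in> carrier_mat d d" by fact
  fix v :: "complex vec" assume v: "v \<in> carrier_vec d"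
  have "(\<Sum>a<d. \<Sum>b<d. cnj (v $ a) * D $$ (a,b) * v $ b) = (\<Sum>a<d. \<Sum>b<d. if b = a then D $$ (a,a) * (cnj (v $ a) * v $ a) else 0)"
    using dg unfolding diagm_def by (intro sum.cong refl) auto
  also have "\<dots> = (\<Sum>a<d. D $$ (a,a) * (cnj (v $ a) * v $ a))"
    by (intro sum.cong refl) simp
  finally have eq: "(\<Sum>a<d. \<Sum>b<d. cnj (v $ a) * D $$ (a,b) * v $ b) = (\<Sum>a<d. D $$ (a,a) * (cnj (v $ a) * v $ a))" .
  have "0 \<le> (\<Sum>a<d. D $$ (a,a) * (cnj (v $ a) * v $ a))"
    by (intro sum_nonneg mult_nonneg_nonneg nn cnj_mult_self_nonneg) simp
  then show "0 \<le> (\<Sum>a<d. \<Sum>b<d. cnj (v $ a) * D $$ (a,b) * v $ b)" by (simp only: eq)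
qed

lemma state_carrier: "\<rho> \<in> states d \<Longrightarrow> \<rho> \<in> carrier_mat d d"
  by (simp add: states_def psd_def)

lemma state_diag_nonneg: "\<rho> \<in> states d \<Longrightarrow> i < d \<Longrightarrow> 0 \<le> \<rho> $$ (i,i)"
  by (rule psd_diag_nonneg) (auto simp: states_def)

lemma Pi_passive:
  assumes r: "\<rho> \<in> states d"
  shows "Pi_ch d \<rho> \<in> passive_states d"
proof -
  have nn: "0 \<le> \<rho> $$ (k,k) / of_nat (k+1)" if "k < d" for k
    using state_diag_nonneg[OF r that] by (rule nonneg_div_nat)
  have psd: "psd d (Pi_ch d \<rho>)"
  proof (rule psd_diag[OF Pi_carrier Pi_diag])
    fix x assume x: "x < d"
    have "0 \<le> (\<Sum>k\<in>{x..<d}. \<rho> $$ (k,k) / of_nat (k+1))"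
      by (rule sum_nonneg) (rule nn, simp)
    then show "0 \<le> Pi_ch d \<rho> $$ (x,x)" using x by (simp only: Pi_index if_True refl)
  qed
  have tr: "trace (Pi_ch d \<rho>) = 1" using r state_carrier[OF r] by (simp add: trace_Pi states_def)
  have ord: "Re (Pi_ch d \<rho> $$ (j,j)) \<le> Re (Pi_ch d \<rho> $$ (i,i))" if ij: "i \<le> j" "j < d" for i j
  proof -
    have "(\<Sum>k\<in>{j..<d}. Re (\<rho> $$ (k,k) / of_nat (k+1))) \<le> (\<Sum>k\<in>{i..<d}. Re (\<rho> $$ (k,k) / of_nat (k+1)))"
      apply (rule sum_mono2)
      using ij nn by (auto simp: less_eq_complex_def simp del: Re_divide_of_nat)
    then show ?thesis using ij by (simp add: Pi_index del: Re_divide_of_nat)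
  qed
  show ?thesis unfolding passive_states_def states_def
    using psd tr ord by (auto simp: Pi_index)
qed

lemma Pi_proj: "i < d \<Longrightarrow> Pi_ch d (proj d i) = tau d i"
proof (rule eq_matI)
  fix x y assume i: "i < d" and xy: "x < dim_row (tau d i)" "y < dim_col (tau d i)"
  have h: "(\<Sum>k\<in>{x..<d}. proj d i $$ (k,k) / of_nat (k+1)) = (if x \<le> i then 1 / of_nat (i+1) else 0)" for x
  proof -
  have "(\<Sum>k\<in>{x..<d}. proj d i $$ (k,k) / of_nat (k+1)) = (\<Sum>k\<in>{x..<d}. if k = i then 1 / of_nat (i+1) else 0)"
    by (intro sum.cong) (auto simp: proj_index)
  also have "\<dots> = (if x \<le> i then 1 / of_nat (i+1) else 0)" using i by (simp add: sum.delta')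
  finally show ?thesis .
  qed
  show "Pi_ch d (proj d i) $$ (x,y) = tau d i $$ (x,y)"
    using xy by (simp only: Pi_index tau_index h tau_dim) simp
qed auto

lemma trace_H_diag:
  assumes A: "A \<in> carrier_mat d d"
  shows "trace (hamiltonian d E * A) = (\<Sum>x<d. complex_of_real (E x) * A $$ (x,x))"
  by (simp add: trace_diag_mult[OF ham_carrier A ham_diag] ham_index)

definition avgE :: "(nat \<Rightarrow> real) \<Rightarrow> nat \<Rightarrow> real" where
  "avgE E i = (\<Sum>x\<le>i. E x) / real (i+1)"

lemma energy_tau: "i < d \<Longrightarrow> Re (trace (hamiltonian d E * tau d i)) = avgE E i"
proof -
  assume i: "i < d"
  have "trace (hamiltonian d E * tau d i) = (\<Sum>x<d. if x \<le> i then complex_of_real (E x) / of_nat (i+1) else 0)"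
    by (simp only: trace_H_diag[OF tau_carrier]) (intro sum.cong, auto simp: tau_index)
  also have "\<dots> = (\<Sum>x\<in>{x\<in>{..<d}. x \<le> i}. complex_of_real (E x) / of_nat (i+1))"
    by (rule sum.inter_filter[symmetric]) simp
  also have "{x\<in>{..<d}. x \<le> i} = {..i}" using i by auto
  finally show ?thesis by (simp add: avgE_def sum_divide_distrib)
qed


lemma avgE_step:
  assumes E: "\<And>i j. i < j \<Longrightarrow> j < d \<Longrightarrow> E i < E j" and j: "Suc j < d"
  shows "avgE E j < avgE E (Suc j)"
proof -
  define S where "S = (\<Sum>x\<le>j. E x)"
  have "S < (\<Sum>x\<le>j. E (Suc j))"
    unfolding S_def by (rule sum_strict_mono) (use E j in auto)
  then have lt: "S < real (j+1) * E (Suc j)" by simp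
  have "avgE E j = S / real (j+1)" by (simp add: avgE_def S_def)
  moreover have "avgE E (Suc j) = (S + E (Suc j)) / real (j+2)" by (simp add: avgE_def S_def)
  moreover have "S / real (j+1) < (S + E (Suc j)) / real (j+2)"
    using lt by (simp add: field_simps)
  ultimately show ?thesis by simp
qed

lemma avgE_strict:
  assumes E: "\<And>i j. i < j \<Longrightarrow> j < d \<Longrightarrow> E i < E j"
  shows "i < j \<Longrightarrow> j < d \<Longrightarrow> avgE E i < avgE E j"
proof (induction j)
  case 0 then show ?case by simp
next
  case (Suc j)
  have st: "avgE E j < avgE E (Suc j)" by (rule avgE_step[OF E Suc.prems(2)])
  show ?case
  proof (cases "i = j")
    case True then show ?thesis using st by simp
  next
    case False
    then have "avgE E i < avgE E j" using Suc by simp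
    then show ?thesis using st by simp
  qed
qed

lemma exp_inv_prod: "exp (- \<i> * complex_of_real a) * exp (\<i> * complex_of_real a) = 1"
  using exp_minus_inverse[of "\<i> * complex_of_real a"] by (simp only: mult.commute mult_minus_left)

lemma U_t_diag_entry:
  assumes r: "\<rho> \<in> carrier_mat d d" and i: "i < d"
  shows "U_t d E t \<rho> $$ (i,i) = \<rho> $$ (i,i)"
  using U_t_index[OF r i i, of E t] exp_inv_prod[of "t * E i"]
  by (simp only: swap3 mult_1_right)

lemma Pi_cov:
  assumes r: "\<rho> \<in> carrier_mat d d"
  shows "U_t d E t (Pi_ch d \<rho>) = Pi_ch d (U_t d E t \<rho>)"
proof -
  have "U_t d E t (Pi_ch d \<rho>) = Pi_ch d \<rho>" by (rule U_t_diag[OF Pi_carrier Pi_diag])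
  also have "Pi_ch d \<rho> = Pi_ch d (U_t d E t \<rho>)"
  proof (rule eq_matI)
    fix x y assume "x < dim_row (Pi_ch d (U_t d E t \<rho>))" "y < dim_col (Pi_ch d (U_t d E t \<rho>))"
    then have xy: "x < d" "y < d" by (simp_all only: Pi_dim)
    have "(\<Sum>i\<in>{x..<d}. \<rho> $$ (i,i) / of_nat (i+1)) = (\<Sum>i\<in>{x..<d}. U_t d E t \<rho> $$ (i,i) / of_nat (i+1))"
      by (intro sum.cong refl) (simp add: U_t_diag_entry[OF r])
    then show "Pi_ch d \<rho> $$ (x,y) = Pi_ch d (U_t d E t \<rho>) $$ (x,y)"
      using xy by (simp only: Pi_index)
  qed (simp_all only: Pi_dim)
  finally show ?thesis .
qed

lemma passive_carrier: "p \<in> passive_states d \<Longrightarrow> p \<in> carrier_mat d d"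
  by (simp add: passive_states_def state_carrier)

lemma one_plus_nat_nz[simp]: "1 + complex_of_nat n \<noteq> 0"
  by (metis add.commute of_nat_Suc of_nat_eq_0_iff nat.simps(3))

lemma Pi_surj:
  assumes p: "p \<in> passive_states d"
  shows "\<exists>\<rho>\<in>states d. Pi_ch d \<rho> = p"
proof -
  have pc: "p \<in> carrier_mat d d" by (rule passive_carrier[OF p])
  have ps: "p \<in> states d" and off: "\<And>a b. a < d \<Longrightarrow> b < d \<Longrightarrow> a \<noteq> b \<Longrightarrow> p $$ (a,b) = 0"
    and ord: "\<And>i j. i \<le> j \<Longrightarrow> j < d \<Longrightarrow> Re (p $$ (j,j)) \<le> Re (p $$ (i,i))"
    using p unfolding passive_states_def by auto
  define q where "q i = (if i < d then p $$ (i,i) else 0)" for i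
  define \<rho> where "\<rho> = mat d d (\<lambda>(x,y). if x = y then of_nat (x+1) * (q x - q (Suc x)) else 0)"
  have rc: "\<rho> \<in> carrier_mat d d" by (simp add: \<rho>_def)
  have rdiag: "diagm d \<rho>" by (simp add: \<rho>_def diagm_def)
  have qnn: "0 \<le> q i - q (Suc i)" if "i < d" for i
  proof -
    have n1: "0 \<le> p $$ (i,i)" by (rule state_diag_nonneg[OF ps that])
    show ?thesis
    proof (cases "Suc i < d")
      case True
      have n2: "0 \<le> p $$ (Suc i, Suc i)" by (rule state_diag_nonneg[OF ps True])
      have "Re (p $$ (Suc i, Suc i)) \<le> Re (p $$ (i,i))" by (rule ord) (use True in auto)
      then show ?thesis using n1 n2 True that by (simp add: q_def less_eq_complex_def)
    next
      case False
      then show ?thesis using n1 that by (simp add: q_def)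
    qed
  qed
  have Pr: "Pi_ch d \<rho> = p"
  proof (rule eq_matI)
    fix x y assume "x < dim_row p" "y < dim_col p"
    then have xy: "x < d" "y < d" using pc by auto
    have "(\<Sum>i\<in>{x..<d}. \<rho> $$ (i,i) / of_nat (i+1)) = (\<Sum>i\<in>{x..<d}. - (q (Suc i) - q i))"
      by (intro sum.cong refl) (simp add: \<rho>_def)
    also have "\<dots> = - (\<Sum>i\<in>{x..<d}. q (Suc i) - q i)" by (simp only: sum_negf)
    also have "\<dots> = - (q d - q x)" using xy by (subst sum_Suc_diff') auto
    also have "\<dots> = q x" by (simp add: q_def)
    finally have h: "(\<Sum>i\<in>{x..<d}. \<rho> $$ (i,i) / of_nat (i+1)) = p $$ (x,x)" using xy by (simp add: q_def)
    show "Pi_ch d \<rho> $$ (x,y) = p $$ (x,y)"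
    proof (cases "x = y")
      case True then show ?thesis using xy h by (simp only: Pi_index if_True refl)
    next
      case False then show ?thesis using xy off by (simp add: Pi_index)
    qed
  qed (use pc in auto)
  have "psd d \<rho>"
  proof (rule psd_diag[OF rc rdiag])
    fix x assume x: "x < d"
    have "0 \<le> of_nat (x+1) * (q x - q (Suc x))"
      by (rule mult_nonneg_nonneg) (use qnn[OF x] in \<open>auto simp: less_eq_complex_def\<close>)
    then show "0 \<le> \<rho> $$ (x,x)" using x by (simp add: \<rho>_def)
  qed
  moreover have "trace \<rho> = 1"
  proof -
    have "trace \<rho> = trace (Pi_ch d \<rho>)" by (simp add: trace_Pi[OF rc])
    also have "\<dots> = 1" using Pr ps by (simp add: states_def)
    finally show ?thesis .
  qed
  ultimately show ?thesis using Pr by (auto simp: states_def)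
qed


lemma sum_lessThan_add: fixes m d :: nat shows "(\<Sum>r<m+d. f r) = (\<Sum>r<m. f r) + (\<Sum>x<d. f (m+x))"
  by (induction d) (simp_all add: add.assoc)

lemma sum_split_kd: fixes k d :: nat shows "(\<Sum>r<k*d. f r) = (\<Sum>a<k. \<Sum>x<d. f (a*d+x))"
proof (induction k)
  case 0 then show ?case by simp
next
  case (Suc k)
  have "(\<Sum>r<Suc k * d. f r) = (\<Sum>r<k*d + d. f r)" by (simp add: add.commute)
  also have "\<dots> = (\<Sum>r<k*d. f r) + (\<Sum>x<d. f (k*d+x))" by (rule sum_lessThan_add)
  finally show ?case using Suc by simp
qed

lemma idx_bound: fixes a k x d :: nat shows "a < k \<Longrightarrow> x < d \<Longrightarrow> a*d+x < k*d"
proof -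
  assume a: "a < k" and x: "x < d"
  have "Suc a * d \<le> k * d" using a by (intro mult_le_mono1) simp
  then show ?thesis using x by simp
qed

lemma divmod_ad: "x < (d::nat) \<Longrightarrow> (a*d+x) div d = a \<and> (a*d+x) mod d = x"
  by simp

lemma double_delta: fixes i d :: nat shows "i < d \<Longrightarrow> (\<Sum>i'<d. \<Sum>j'<d. if i' = i \<and> j' = i then (g::complex) else 0) = g"
proof -
  assume i: "i < d"
  have "(\<Sum>i'<d. \<Sum>j'<d. if i' = i \<and> j' = i then g else 0) = (\<Sum>i'<d. if i' = i then (\<Sum>j'<d. if j' = i then g else 0) else 0)"
    by (intro sum.cong) auto
  also have "\<dots> = g" using i by simp
  finally show ?thesis .
qed

lemma swap3sum: "(\<Sum>a\<in>A. \<Sum>b\<in>B. \<Sum>i\<in>C. f a b i) = (\<Sum>i\<in>C. \<Sum>a\<in>A. \<Sum>b\<in>B. f a b i)"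
proof -
  have "(\<Sum>a\<in>A. \<Sum>b\<in>B. \<Sum>i\<in>C. f a b i) = (\<Sum>a\<in>A. \<Sum>i\<in>C. \<Sum>b\<in>B. f a b i)"
    by (rule sum.cong[OF refl]) (rule sum.swap)
  also have "\<dots> = (\<Sum>i\<in>C. \<Sum>a\<in>A. \<Sum>b\<in>B. f a b i)" by (rule sum.swap)
  finally show ?thesis .
qed

lemma Pi_cp: "completely_positive d (Pi_ch d)"
  unfolding completely_positive_def
proof (intro allI impI)
  fix k M assume Mp: "psd (k*d) M"
  then have Mc: "M \<in> carrier_mat (k*d) (k*d)" and
    Mq: "\<And>u. u \<in> carrier_vec (k*d) \<Longrightarrow> 0 \<le> (\<Sum>r<k*d. \<Sum>c<k*d. cnj (u $ r) * M $$ (r,c) * u $ c)"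
    unfolding psd_def by auto
  define S where "S a b x = (\<Sum>i\<in>{x..<d}. M $$ (a*d+i, b*d+i) / of_nat (i+1))" for a b x
  define Q where "Q = ampl d k (Pi_ch d) M"
  have Qidx: "Q $$ (a*d+x, b*d+y) = (if x = y then S a b x else 0)"
    if ab: "a < k" "b < k" and xy: "x < d" "y < d" for a b x y
  proof -
    have b1: "a*d+x < k*d" "b*d+y < k*d" using ab xy by (simp_all add: idx_bound)
    have "Q $$ (a*d+x, b*d+y) = Pi_ch d (block d M a b) $$ (x, y)"
      using b1 xy by (simp add: Q_def ampl_def)
    also have "\<dots> = (if x = y then S a b x else 0)"
      using xy by (simp add: Pi_index S_def block_def)
    finally show ?thesis .
  qed
  show "psd (k*d) Q" unfolding psd_def
  proof (intro conjI ballI)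
    show "Q \<in> carrier_mat (k*d) (k*d)" by (simp add: Q_def ampl_def)
    fix v :: "complex vec" assume v: "v \<in> carrier_vec (k*d)"
    define G where "G x i = (\<Sum>a<k. \<Sum>b<k. cnj (v $ (a*d+x)) * M $$ (a*d+i, b*d+i) * v $ (b*d+x))" for x i
    have "(\<Sum>r<k*d. \<Sum>c<k*d. cnj (v $ r) * Q $$ (r,c) * v $ c) =
          (\<Sum>a<k. \<Sum>x<d. \<Sum>b<k. \<Sum>y<d. cnj (v $ (a*d+x)) * Q $$ (a*d+x, b*d+y) * v $ (b*d+y))"
      by (simp add: sum_split_kd)
    also have "\<dots> = (\<Sum>a<k. \<Sum>x<d. \<Sum>b<k. cnj (v $ (a*d+x)) * S a b x * v $ (b*d+x))"
    proof (intro sum.cong refl)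
      fix a x b assume "a \<in> {..<k}" "x \<in> {..<d}" "b \<in> {..<k}"
      then have abx: "a < k" "x < d" "b < k" by auto
      have "(\<Sum>y<d. cnj (v $ (a*d+x)) * Q $$ (a*d+x, b*d+y) * v $ (b*d+y)) =
            (\<Sum>y<d. if y = x then cnj (v $ (a*d+x)) * S a b x * v $ (b*d+x) else 0)"
        by (intro sum.cong refl) (auto simp: Qidx abx)
      also have "\<dots> = cnj (v $ (a*d+x)) * S a b x * v $ (b*d+x)" using abx by simp
      finally show "(\<Sum>y<d. cnj (v $ (a*d+x)) * Q $$ (a*d+x, b*d+y) * v $ (b*d+y)) =
            cnj (v $ (a*d+x)) * S a b x * v $ (b*d+x)" .
    qed
    also have "\<dots> = (\<Sum>x<d. \<Sum>a<k. \<Sum>b<k. cnj (v $ (a*d+x)) * S a b x * v $ (b*d+x))"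
      by (rule sum.swap)
    also have "\<dots> = (\<Sum>x<d. \<Sum>a<k. \<Sum>b<k. \<Sum>i\<in>{x..<d}. cnj (v $ (a*d+x)) * M $$ (a*d+i, b*d+i) * v $ (b*d+x) / of_nat (i+1))"
      by (simp add: S_def sum_distrib_left sum_distrib_right mult.assoc)
    also have "\<dots> = (\<Sum>x<d. \<Sum>i\<in>{x..<d}. \<Sum>a<k. \<Sum>b<k. cnj (v $ (a*d+x)) * M $$ (a*d+i, b*d+i) * v $ (b*d+x) / of_nat (i+1))"
    proof (rule sum.cong[OF refl])
      fix x
      show "(\<Sum>a<k. \<Sum>b<k. \<Sum>i\<in>{x..<d}. cnj (v $ (a*d+x)) * M $$ (a*d+i, b*d+i) * v $ (b*d+x) / of_nat (i+1)) =
            (\<Sum>i\<in>{x..<d}. \<Sum>a<k. \<Sum>b<k. cnj (v $ (a*d+x)) * M $$ (a*d+i, b*d+i) * v $ (b*d+x) / of_nat (i+1))"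
        by (rule swap3sum)
    qed
    also have "\<dots> = (\<Sum>x<d. \<Sum>i\<in>{x..<d}. G x i / of_nat (i+1))"
      by (simp add: G_def sum_divide_distrib)
    finally have eq: "(\<Sum>r<k*d. \<Sum>c<k*d. cnj (v $ r) * Q $$ (r,c) * v $ c) = (\<Sum>x<d. \<Sum>i\<in>{x..<d}. G x i / of_nat (i+1))" .
    have Gnn: "0 \<le> G x i" if xi: "x < d" "i < d" for x i
    proof -
      define u where "u = vec (k*d) (\<lambda>r. if r mod d = i then v $ ((r div d)*d + x) else 0)"
      have uc: "u \<in> carrier_vec (k*d)" by (simp add: u_def)
      have "(\<Sum>r<k*d. \<Sum>c<k*d. cnj (u $ r) * M $$ (r,c) * u $ c) =
            (\<Sum>a<k. \<Sum>i'<d. \<Sum>b<k. \<Sum>j'<d. cnj (u $ (a*d+i')) * M $$ (a*d+i', b*d+j') * u $ (b*d+j'))"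
        by (simp add: sum_split_kd)
      also have "\<dots> = (\<Sum>a<k. \<Sum>i'<d. \<Sum>b<k. \<Sum>j'<d. if i' = i \<and> j' = i then cnj (v $ (a*d+x)) * M $$ (a*d+i, b*d+i) * v $ (b*d+x) else 0)"
      proof (intro sum.cong refl)
        fix a i' b j' assume "a \<in> {..<k}" "i' \<in> {..<d}" "b \<in> {..<k}" "j' \<in> {..<d}"
        then have h: "a < k" "i' < d" "b < k" "j' < d" by auto
        then have b1: "a*d+i' < k*d" "b*d+j' < k*d" by (simp_all add: idx_bound)
        show "cnj (u $ (a*d+i')) * M $$ (a*d+i', b*d+j') * u $ (b*d+j') =
              (if i' = i \<and> j' = i then cnj (v $ (a*d+x)) * M $$ (a*d+i, b*d+i) * v $ (b*d+x) else 0)"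
          using b1 h by (auto simp: u_def)
      qed
      also have "\<dots> = (\<Sum>a<k. \<Sum>b<k. \<Sum>i'<d. \<Sum>j'<d. if i' = i \<and> j' = i then cnj (v $ (a*d+x)) * M $$ (a*d+i, b*d+i) * v $ (b*d+x) else 0)"
        by (rule sum.cong[OF refl]) (rule sum.swap)
      also have "\<dots> = G x i"
        unfolding G_def using xi by (simp only: double_delta)
      finally have "(\<Sum>r<k*d. \<Sum>c<k*d. cnj (u $ r) * M $$ (r,c) * u $ c) = G x i" .
      then show ?thesis using Mq[OF uc] by simp
    qed
    have "0 \<le> (\<Sum>x<d. \<Sum>i\<in>{x..<d}. G x i / of_nat (i+1))"
      by (intro sum_nonneg nonneg_div_nat Gnn) auto
    then show "0 \<le> (\<Sum>r<k*d. \<Sum>c<k*d. cnj (v $ r) * Q $$ (r,c) * v $ c)" by (simp only: eq)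
  qed
qed


lemma Pi_props:
  assumes E: "\<And>i j. i < j \<Longrightarrow> j < d \<Longrightarrow> E i < E j"
  shows "characterizing_props d E (Pi_ch d)"
  unfolding characterizing_props_def
proof (intro conjI allI impI ballI)
  show "quantum_channel d (Pi_ch d)"
    unfolding quantum_channel_def
    by (intro conjI ballI allI Pi_carrier Pi_add Pi_smult trace_Pi Pi_cp) assumption+
  show "activity_breaking d (Pi_ch d)"
    unfolding activity_breaking_def by (intro ballI Pi_passive)
  show "Pi_ch d ` states d = passive_states d"
  proof
    show "Pi_ch d ` states d \<subseteq> passive_states d" using Pi_passive by auto
    show "passive_states d \<subseteq> Pi_ch d ` states d" using Pi_surj by fastforce
  qed
  fix t :: real and \<rho> :: "complex mat" assume "\<rho> \<in> carrier_mat d d"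
  then show "U_t d E t (Pi_ch d \<rho>) = Pi_ch d (U_t d E t \<rho>)" by (rule Pi_cov)
next
  fix i j :: nat assume ij: "i \<le> j" "j < d"
  have "avgE E i \<le> avgE E j"
  proof (cases "i = j")
    case False
    have "avgE E i < avgE E j" by (rule avgE_strict[OF E]) (use ij False in auto)
    then show ?thesis by simp
  qed simp
  then show "Re (trace (hamiltonian d E * Pi_ch d (proj d i))) \<le> Re (trace (hamiltonian d E * Pi_ch d (proj d j)))"
    using ij by (simp add: Pi_proj energy_tau)
qed


definition ematp :: "nat \<Rightarrow> nat \<times> nat \<Rightarrow> complex mat" where
  "ematp d p = mat d d (\<lambda>q. if q = p then 1 else 0)"

lemma ematp_carrier[simp]: "ematp d p \<in> carrier_mat d d" by (simp add: ematp_def)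
lemma ematp_dim[simp]: "dim_row (ematp d p) = d" "dim_col (ematp d p) = d" by (simp_all add: ematp_def)
lemma ematp_index: "x < d \<Longrightarrow> y < d \<Longrightarrow> ematp d p $$ (x,y) = (if (x,y) = p then 1 else 0)"
  by (simp add: ematp_def)

lemma matsum_empty: "matsum d f {} = 0\<^sub>m d d"
  by (rule eq_matI) (auto simp: matsum_def)

lemma matsum_insert:
  assumes "finite I" "i \<notin> I" "f i \<in> carrier_mat d d"
  shows "matsum d f (insert i I) = f i + matsum d f I"
  by (rule eq_matI) (use assms in \<open>auto simp: matsum_def\<close>)

lemma lin_zero:
  fixes P :: "complex mat \<Rightarrow> complex mat"
  assumes Pc: "\<forall>A \<in> carrier_mat d d. P A \<in> carrier_mat d d"
    and Ps: "\<forall>A \<in> carrier_mat d d. \<forall>c. P (c \<cdot>\<^sub>m A) = c \<cdot>\<^sub>m P A"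
  shows "P (0\<^sub>m d d) = 0\<^sub>m d d"
proof -
  have z: "(0::complex) \<cdot>\<^sub>m 0\<^sub>m d d = 0\<^sub>m d d" by simp
  have "P (0\<^sub>m d d) = P ((0::complex) \<cdot>\<^sub>m 0\<^sub>m d d)" by (simp only: z)
  also have "\<dots> = 0 \<cdot>\<^sub>m P (0\<^sub>m d d)" using Ps zero_carrier_mat[of d d] by blast
  also have "\<dots> = 0\<^sub>m d d"
  proof -
    have "P (0\<^sub>m d d) \<in> carrier_mat d d" using Pc zero_carrier_mat[of d d] by blast
    then show ?thesis by (intro eq_matI) auto
  qed
  finally show ?thesis .
qed

lemma lin_matsum:
  fixes P :: "complex mat \<Rightarrow> complex mat"
  assumes Pc: "\<forall>A \<in> carrier_mat d d. P A \<in> carrier_mat d d"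
    and Pa: "\<forall>A \<in> carrier_mat d d. \<forall>B \<in> carrier_mat d d. P (A + B) = P A + P B"
    and Ps: "\<forall>A \<in> carrier_mat d d. \<forall>c. P (c \<cdot>\<^sub>m A) = c \<cdot>\<^sub>m P A"
    and fin: "finite I" and fc: "\<And>i. i \<in> I \<Longrightarrow> f i \<in> carrier_mat d d"
  shows "P (matsum d f I) = matsum d (\<lambda>i. P (f i)) I"
  using fin fc
proof (induction I rule: finite_induct)
  case empty
  then show ?case using lin_zero[OF Pc Ps] by (simp add: matsum_empty)
next
  case (insert i I)
  have fi: "f i \<in> carrier_mat d d" using insert by simp
  have "P (matsum d f (insert i I)) = P (f i + matsum d f I)"
    using insert fi by (simp add: matsum_insert)
  also have "\<dots> = P (f i) + P (matsum d f I)" using Pa fi by simp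
  also have "P (matsum d f I) = matsum d (\<lambda>i. P (f i)) I" using insert by simp
  also have "P (f i) + matsum d (\<lambda>i. P (f i)) I = matsum d (\<lambda>i. P (f i)) (insert i I)"
    using insert fi Pc by (simp add: matsum_insert)
  finally show ?case .
qed

lemma mat_decomp:
  assumes A: "A \<in> carrier_mat d d"
  shows "A = matsum d (\<lambda>p. A $$ p \<cdot>\<^sub>m ematp d p) ({..<d} \<times> {..<d})"
proof (rule eq_matI)
  fix x y assume "x < dim_row (matsum d (\<lambda>p. A $$ p \<cdot>\<^sub>m ematp d p) ({..<d} \<times> {..<d}))"
    "y < dim_col (matsum d (\<lambda>p. A $$ p \<cdot>\<^sub>m ematp d p) ({..<d} \<times> {..<d}))"
  then have xy: "x < d" "y < d" by simp_all
  have "matsum d (\<lambda>p. A $$ p \<cdot>\<^sub>m ematp d p) ({..<d} \<times> {..<d}) $$ (x,y)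
     = (\<Sum>p\<in>{..<d} \<times> {..<d}. if p = (x,y) then A $$ (x,y) else 0)"
    using xy by (simp only: matsum_index) (intro sum.cong refl, auto simp: ematp_index)
  also have "\<dots> = A $$ (x,y)" using xy by (simp add: sum.delta')
  finally show "A $$ (x,y) = matsum d (\<lambda>p. A $$ p \<cdot>\<^sub>m ematp d p) ({..<d} \<times> {..<d}) $$ (x,y)" by simp
qed (use A in auto)

lemma lin_expand:
  fixes P :: "complex mat \<Rightarrow> complex mat"
  assumes Pc: "\<forall>A \<in> carrier_mat d d. P A \<in> carrier_mat d d"
    and Pa: "\<forall>A \<in> carrier_mat d d. \<forall>B \<in> carrier_mat d d. P (A + B) = P A + P B"
    and Ps: "\<forall>A \<in> carrier_mat d d. \<forall>c. P (c \<cdot>\<^sub>m A) = c \<cdot>\<^sub>m P A"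
    and A: "A \<in> carrier_mat d d" and xy: "x < d" "y < d"
  shows "P A $$ (x,y) = (\<Sum>p\<in>{..<d} \<times> {..<d}. A $$ p * P (ematp d p) $$ (x,y))"
proof -
  have "P A = P (matsum d (\<lambda>p. A $$ p \<cdot>\<^sub>m ematp d p) ({..<d} \<times> {..<d}))"
    using mat_decomp[OF A] by simp
  also have "\<dots> = matsum d (\<lambda>p. P (A $$ p \<cdot>\<^sub>m ematp d p)) ({..<d} \<times> {..<d})"
    by (rule lin_matsum[OF Pc Pa Ps]) auto
  finally have "P A $$ (x,y) = (\<Sum>p\<in>{..<d} \<times> {..<d}. P (A $$ p \<cdot>\<^sub>m ematp d p) $$ (x,y))"
    using xy by (simp add: matsum_index)
  also have "\<dots> = (\<Sum>p\<in>{..<d} \<times> {..<d}. A $$ p * P (ematp d p) $$ (x,y))"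
  proof (rule sum.cong[OF refl])
    fix p
    have c: "P (ematp d p) \<in> carrier_mat d d" using Pc by simp
    show "P (A $$ p \<cdot>\<^sub>m ematp d p) $$ (x,y) = A $$ p * P (ematp d p) $$ (x,y)"
      using Ps c xy by simp
  qed
  finally show ?thesis .
qed

lemma exp_pair: "exp (- \<i> * complex_of_real (t * x)) * exp (\<i> * complex_of_real (t * y)) = cis (t * (y - x))"
  unfolding cis_conv_exp mult_exp_exp by (simp add: algebra_simps)


lemma psd_smult:
  assumes M: "psd d M" and c: "0 \<le> c"
  shows "psd d (c \<cdot>\<^sub>m M)"
  unfolding psd_def
proof (intro conjI ballI)
  have Mc: "M \<in> carrier_mat d d" using M by (simp add: psd_def)
  then show "c \<cdot>\<^sub>m M \<in> carrier_mat d d" by simp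
  fix v :: "complex vec" assume v: "v \<in> carrier_vec d"
  have "(\<Sum>a<d. \<Sum>b<d. cnj (v $ a) * (c \<cdot>\<^sub>m M) $$ (a,b) * v $ b) = c * (\<Sum>a<d. \<Sum>b<d. cnj (v $ a) * M $$ (a,b) * v $ b)"
    using Mc by (simp add: sum_distrib_left ac_simps)
  moreover have "0 \<le> c * (\<Sum>a<d. \<Sum>b<d. cnj (v $ a) * M $$ (a,b) * v $ b)"
    using M v c unfolding psd_def by (intro mult_nonneg_nonneg) auto
  ultimately show "0 \<le> (\<Sum>a<d. \<Sum>b<d. cnj (v $ a) * (c \<cdot>\<^sub>m M) $$ (a,b) * v $ b)" by simp
qed

lemma passive_diag: "p \<in> passive_states d \<Longrightarrow> diagm d p"
  by (simp add: passive_states_def diagm_def)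

lemma offdiag_zero:
  fixes P :: "complex mat \<Rightarrow> complex mat"
  assumes props: "characterizing_props d E P"
    and E: "\<And>i j. i < j \<Longrightarrow> j < d \<Longrightarrow> E i < E j"
    and ab: "a < d" "b < d" "a \<noteq> b" and xy: "x < d" "y < d"
  shows "P (ematp d (a,b)) $$ (x,y) = 0"
proof -
  have Pc: "\<forall>A \<in> carrier_mat d d. P A \<in> carrier_mat d d"
    and Pa: "\<forall>A \<in> carrier_mat d d. \<forall>B \<in> carrier_mat d d. P (A + B) = P A + P B"
    and Ps: "\<forall>A \<in> carrier_mat d d. \<forall>c. P (c \<cdot>\<^sub>m A) = c \<cdot>\<^sub>m P A"
    and AB: "\<forall>\<rho> \<in> states d. P \<rho> \<in> passive_states d"
    and cov: "\<And>t \<rho>. \<rho> \<in> carrier_mat d d \<Longrightarrow> U_t d E t (P \<rho>) = P (U_t d E t \<rho>)"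
    using props unfolding characterizing_props_def quantum_channel_def activity_breaking_def by auto
  define w where "w = vec d (\<lambda>k. if k = a \<or> k = b then (1::complex) else 0)"
  define \<rho> where "\<rho> = (1/2::complex) \<cdot>\<^sub>m ketbra w"
  have rc: "\<rho> \<in> carrier_mat d d" by (simp add: \<rho>_def ketbra_def w_def)
  have ridx: "\<rho> $$ (p1,p2) = (if (p1 = a \<or> p1 = b) \<and> (p2 = a \<or> p2 = b) then 1/2 else 0)"
    if "p1 < d" "p2 < d" for p1 p2
    using that by (simp add: \<rho>_def ketbra_def w_def)
  have rstate: "\<rho> \<in> states d"
  proof -
    have "psd d \<rho>" unfolding \<rho>_def
      by (rule psd_smult[OF psd_ketbra]) (auto simp: w_def less_eq_complex_def)
    moreover have "trace \<rho> = 1"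
    proof -
      have "trace \<rho> = (\<Sum>k<d. if k = a \<or> k = b then 1/2 else 0)"
        unfolding trace_def using rc by (intro sum.cong) (auto simp: ridx)
      also have "\<dots> = (\<Sum>k\<in>{k\<in>{..<d}. k = a \<or> k = b}. 1/2)"
        by (rule sum.inter_filter[symmetric]) simp
      also have "{k\<in>{..<d}. k = a \<or> k = b} = {a,b}" using ab by auto
      finally show ?thesis using ab by simp
    qed
    ultimately show ?thesis by (simp add: states_def)
  qed
  have Prc: "P \<rho> \<in> carrier_mat d d" using Pc rc by blast
  have PU: "P (U_t d E t \<rho>) = P \<rho>" for t
  proof -
    have "P (U_t d E t \<rho>) = U_t d E t (P \<rho>)" using cov[OF rc] by simp
    also have "\<dots> = P \<rho>" using AB rstate Prc by (intro U_t_diag passive_diag) auto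
    finally show ?thesis .
  qed
  define Qf where "Qf p = P (ematp d p) $$ (x,y)" for p
  define D2 where "D2 = {..<d} \<times> {..<d}"
  have gen: "(\<Sum>p\<in>D2. \<rho> $$ p * (cis (t * (E (snd p) - E (fst p))) - 1) * Qf p) = 0" for t
  proof -
    have "(\<Sum>p\<in>D2. \<rho> $$ p * (cis (t * (E (snd p) - E (fst p))) - 1) * Qf p) =
          (\<Sum>p\<in>D2. U_t d E t \<rho> $$ p * Qf p - \<rho> $$ p * Qf p)"
    proof (rule sum.cong[OF refl])
      fix p assume "p \<in> D2"
      then obtain p1 p2 where p: "p = (p1,p2)" "p1 < d" "p2 < d" by (auto simp: D2_def)
      have "U_t d E t \<rho> $$ p = \<rho> $$ p * cis (t * (E p2 - E p1))"
        using U_t_index[OF rc p(2,3), of E t] exp_pair[of t "E p1" "E p2"] p(1)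
        by (simp only: swap3)
      then show "\<rho> $$ p * (cis (t * (E (snd p) - E (fst p))) - 1) * Qf p = U_t d E t \<rho> $$ p * Qf p - \<rho> $$ p * Qf p"
        using p by (simp add: algebra_simps)
    qed
    also have "\<dots> = P (U_t d E t \<rho>) $$ (x,y) - P \<rho> $$ (x,y)"
      unfolding D2_def Qf_def
      using lin_expand[OF Pc Pa Ps U_t_carrier xy, of E t \<rho>] lin_expand[OF Pc Pa Ps rc xy]
      by (simp add: sum_subtractf)
    also have "\<dots> = 0" by (simp add: PU)
    finally show ?thesis .
  qed
  define \<omega> where "\<omega> = E b - E a"
  have \<omega>: "\<omega> \<noteq> 0"
  proof
    assume "\<omega> = 0"
    then have "E a = E b" by (simp add: \<omega>_def)
    moreover have "E a \<noteq> E b" using ab E[of a b] E[of b a] by (cases "a < b") auto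
    ultimately show False by simp
  qed
  have red: "(cis (t * \<omega>) - 1) * Qf (a,b) + (cis (- (t * \<omega>)) - 1) * Qf (b,a) = 0" for t
  proof -
    define g where "g p = \<rho> $$ p * (cis (t * (E (snd p) - E (fst p))) - 1) * Qf p" for p
    have "sum g D2 = sum g {(a,b),(b,a)}"
    proof (rule sum.mono_neutral_right)
      show "finite D2" by (simp add: D2_def)
      show "{(a,b),(b,a)} \<subseteq> D2" using ab by (auto simp: D2_def)
      show "\<forall>p\<in>D2 - {(a,b),(b,a)}. g p = 0"
      proof
        fix p assume pD: "p \<in> D2 - {(a,b),(b,a)}"
        then obtain p1 p2 where p: "p = (p1,p2)" "p1 < d" "p2 < d" by (auto simp: D2_def)
        show "g p = 0"
        proof (cases "p1 = p2")
          case True then show ?thesis by (simp add: g_def p)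
        next
          case False
          then have "\<rho> $$ p = 0" using pD p by (auto simp: ridx)
          then show ?thesis by (simp add: g_def)
        qed
      qed
    qed
    also have "\<dots> = g (a,b) + g (b,a)" using ab by simp
    also have "g (a,b) = (cis (t * \<omega>) - 1) * Qf (a,b) / 2" using ab by (simp add: g_def ridx \<omega>_def)
    also have "g (b,a) = (cis (- (t * \<omega>)) - 1) * Qf (b,a) / 2"
    proof -
      have e: "t * (E a - E b) = - (t * \<omega>)" by (simp add: \<omega>_def algebra_simps)
      show ?thesis using ab by (simp add: g_def ridx e)
    qed
    finally have "(cis (t * \<omega>) - 1) * Qf (a,b) / 2 + (cis (- (t * \<omega>)) - 1) * Qf (b,a) / 2 = 0"
      using gen[of t] by (simp add: g_def D2_def)
    then show ?thesis by (simp only: add_divide_distrib[symmetric] divide_eq_0_iff) simp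
  qed
  have r1: "(cis pi - 1) * Qf (a,b) + (cis (- pi) - 1) * Qf (b,a) = 0"
    using red[of "pi / \<omega>"] \<omega> by simp
  have r2: "(cis (pi/2) - 1) * Qf (a,b) + (cis (- (pi/2)) - 1) * Qf (b,a) = 0"
    using red[of "pi / 2 / \<omega>"] \<omega> by simp
  have c1: "cis (- pi) = -1" by (simp add: complex_eq_iff)
  have c2: "cis (- (pi/2)) = - \<i>" by (simp add: complex_eq_iff)
  from r1 c1 have s1: "Qf (b,a) = - Qf (a,b)" by simp
  from r2 c2 s1 have "2 * \<i> * Qf (a,b) = 0" by (simp add: algebra_simps)
  then show ?thesis by (simp add: Qf_def)
qed


lemma ematp_proj: "ematp d (i,i) = proj d i"
  by (rule eq_matI) (auto simp: ematp_index proj_index)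

lemma diag_expand:
  fixes P :: "complex mat \<Rightarrow> complex mat"
  assumes props: "characterizing_props d E P"
    and E: "\<And>i j. i < j \<Longrightarrow> j < d \<Longrightarrow> E i < E j"
    and A: "A \<in> carrier_mat d d" and xy: "x < d" "y < d"
  shows "P A $$ (x,y) = (\<Sum>i<d. A $$ (i,i) * P (proj d i) $$ (x,y))"
proof -
  have Pc: "\<forall>A \<in> carrier_mat d d. P A \<in> carrier_mat d d"
    and Pa: "\<forall>A \<in> carrier_mat d d. \<forall>B \<in> carrier_mat d d. P (A + B) = P A + P B"
    and Ps: "\<forall>A \<in> carrier_mat d d. \<forall>c. P (c \<cdot>\<^sub>m A) = c \<cdot>\<^sub>m P A"
    using props unfolding characterizing_props_def quantum_channel_def by auto
  define g where "g p = A $$ p * P (ematp d p) $$ (x,y)" for p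
  have "P A $$ (x,y) = sum g ({..<d} \<times> {..<d})"
    unfolding g_def by (rule lin_expand[OF Pc Pa Ps A xy])
  also have "\<dots> = sum g ((\<lambda>i. (i,i)) ` {..<d})"
  proof (rule sum.mono_neutral_right)
    show "finite ({..<d} \<times> {..<d})" by simp
    show "(\<lambda>i. (i,i)) ` {..<d} \<subseteq> {..<d} \<times> {..<d}" by auto
    show "\<forall>p\<in>{..<d} \<times> {..<d} - (\<lambda>i. (i,i)) ` {..<d}. g p = 0"
    proof
      fix p assume p: "p \<in> {..<d} \<times> {..<d} - (\<lambda>i. (i,i)) ` {..<d}"
      then obtain a b where ab: "p = (a,b)" "a < d" "b < d" "a \<noteq> b" by auto
      show "g p = 0" using offdiag_zero[OF props E ab(2,3,4) xy] ab(1) by (simp add: g_def)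
    qed
  qed
  also have "\<dots> = (\<Sum>i<d. g (i,i))" by (subst sum.reindex) (auto simp: inj_on_def)
  also have "\<dots> = (\<Sum>i<d. A $$ (i,i) * P (proj d i) $$ (x,y))" by (simp add: g_def ematp_proj)
  finally show ?thesis .
qed

lemma smono_id:
  fixes f :: "nat \<Rightarrow> nat"
  assumes sm: "\<And>i j. i < j \<Longrightarrow> j < d \<Longrightarrow> f i < f j" and bd: "\<And>i. i < d \<Longrightarrow> f i < d"
    and i: "i < d"
  shows "f i = i"
proof -
  have ge: "i \<le> f i" if "i < d" for i
    using that
  proof (induction i)
    case 0 then show ?case by simp
  next
    case (Suc i)
    then have "i \<le> f i" by simp
    moreover have "f i < f (Suc i)" using sm Suc.prems by simp
    ultimately show ?case by simp
  qed
  have step: "f i + m \<le> f (i+m)" if "i + m < d" for m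
    using that
  proof (induction m)
    case 0 then show ?case by simp
  next
    case (Suc m)
    then have "f i + m \<le> f (i+m)" by simp
    moreover have "f (i+m) < f (i + Suc m)" using sm Suc.prems by simp
    ultimately show ?case by simp
  qed
  have "f i + (d - 1 - i) \<le> f (i + (d - 1 - i))" using i by (intro step) simp
  moreover have "f (i + (d - 1 - i)) < d" using i by (intro bd) simp
  ultimately have "f i \<le> i" using i by simp
  with ge[OF i] show ?thesis by simp
qed

lemma extremal:
  fixes s :: "nat \<Rightarrow> nat \<Rightarrow> real" and l :: "nat \<Rightarrow> real"
  assumes snn: "\<And>i x. i < d \<Longrightarrow> x < d \<Longrightarrow> 0 \<le> s i x"
    and ssum: "\<And>i. i < d \<Longrightarrow> (\<Sum>x<d. s i x) = 1"
    and smono: "\<And>i x y. i < d \<Longrightarrow> x \<le> y \<Longrightarrow> y < d \<Longrightarrow> s i y \<le> s i x"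
    and lnn: "\<And>i. i < d \<Longrightarrow> 0 \<le> l i" and lsum: "(\<Sum>i<d. l i) = 1"
    and j: "j < d"
    and comb: "\<And>x. x < d \<Longrightarrow> (\<Sum>i<d. l i * s i x) = (if x \<le> j then 1 / real (j+1) else 0)"
  shows "\<exists>i<d. \<forall>x<d. s i x = (if x \<le> j then 1 / real (j+1) else 0)"
proof -
  obtain i0 where i0: "i0 < d" "0 < l i0"
  proof (rule ccontr)
    assume "\<not> thesis"
    have "\<forall>i<d. l i = 0"
    proof (intro allI impI)
      fix i assume i: "i < d"
      show "l i = 0"
      proof (rule ccontr)
        assume "l i \<noteq> 0"
        then have "0 < l i" using lnn[OF i] by simp
        then show False using that[OF i] \<open>\<not> thesis\<close> by blast
      qed
    qed
    then have "(\<Sum>i<d. l i) = 0" by simp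
    with lsum show False by simp
  qed
  have tail: "s i x = 0" if i: "i < d" "0 < l i" and x: "j < x" "x < d" for i x
  proof -
    have "(\<Sum>i<d. l i * s i x) = 0" using comb[OF x(2)] x by simp
    moreover have "\<forall>i\<in>{..<d}. 0 \<le> l i * s i x" using lnn snn x by simp
    ultimately have "\<forall>i\<in>{..<d}. l i * s i x = 0" by (subst sum_nonneg_eq_0_iff[symmetric]) auto
    then show ?thesis using i by force
  qed
  have head: "(\<Sum>x\<le>j. s i x) = 1" if i: "i < d" "0 < l i" for i
  proof -
    have "(\<Sum>x<d. s i x) = (\<Sum>x<d. if x \<le> j then s i x else 0)"
      by (intro sum.cong refl) (auto simp: tail[OF i])
    also have "\<dots> = (\<Sum>x\<in>{x\<in>{..<d}. x \<le> j}. s i x)" by (rule sum.inter_filter[symmetric]) simp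
    also have "{x\<in>{..<d}. x \<le> j} = {..j}" using j by auto
    finally show ?thesis using ssum[OF i(1)] by simp
  qed
  have s0: "1 / real (j+1) \<le> s i 0" if i: "i < d" "0 < l i" for i
  proof -
    have "(\<Sum>x\<le>j. s i x) \<le> (\<Sum>x\<le>j. s i 0)"
      by (intro sum_mono smono) (use i j in auto)
    then have "1 \<le> real (j+1) * s i 0" using head[OF i] by simp
    then show ?thesis by (simp add: field_simps)
  qed
  have "(\<Sum>i<d. l i * (s i 0 - 1 / real (j+1))) = (\<Sum>i<d. l i * s i 0) - (\<Sum>i<d. l i) / real (j+1)"
    by (simp add: algebra_simps sum_subtractf sum_divide_distrib)
  also have "\<dots> = 0" using comb[of 0] j lsum by simp
  finally have z: "(\<Sum>i<d. l i * (s i 0 - 1 / real (j+1))) = 0" .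
  have "\<forall>i\<in>{..<d}. 0 \<le> l i * (s i 0 - 1 / real (j+1))"
  proof
    fix i assume "i \<in> {..<d}"
    then have i: "i < d" by simp
    show "0 \<le> l i * (s i 0 - 1 / real (j+1))"
    proof (cases "l i = 0")
      case False
      then have "0 < l i" using lnn[OF i] by simp
      then show ?thesis using s0[OF i] lnn[OF i] by simp
    qed simp
  qed
  with z have "\<forall>i\<in>{..<d}. l i * (s i 0 - 1 / real (j+1)) = 0" by (subst sum_nonneg_eq_0_iff[symmetric]) auto
  then have s00: "s i0 0 = 1 / real (j+1)" using i0 by force
  have allhead: "s i0 x = 1 / real (j+1)" if x: "x \<le> j" for x
  proof -
    have le: "s i0 y \<le> 1 / real (j+1)" if "y \<le> j" for y
      using smono[of i0 0 y] i0 that j s00 by simp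
    have "(\<Sum>y\<le>j. 1 / real (j+1) - s i0 y) = 0"
      using head[OF i0] by (simp add: sum_subtractf)
    moreover have "\<forall>y\<in>{..j}. 0 \<le> 1 / real (j+1) - s i0 y" using le by simp
    ultimately have "\<forall>y\<in>{..j}. 1 / real (j+1) - s i0 y = 0" by (subst sum_nonneg_eq_0_iff[symmetric]) auto
    then show ?thesis using x by simp
  qed
  show ?thesis
  proof (intro exI conjI allI impI)
    show "i0 < d" by fact
    fix x assume "x < d"
    then show "s i0 x = (if x \<le> j then 1 / real (j+1) else 0)"
      using allhead tail[OF i0] by auto
  qed
qed


lemma nonneg_real: "0 \<le> (z::complex) \<Longrightarrow> z = complex_of_real (Re z)"
  by (simp add: less_eq_complex_def complex_eq_iff)

lemma passive_state: "p \<in> passive_states d \<Longrightarrow> p \<in> states d"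
  by (simp add: passive_states_def)

lemma tau_passive: "j < d \<Longrightarrow> tau d j \<in> passive_states d"
  using Pi_passive[OF proj_state, of j d] Pi_proj[of j d] by simp

lemma tau_distinct: "j < j' \<Longrightarrow> j' < d \<Longrightarrow> tau d j \<noteq> tau d j'"
proof
  assume jj: "j < j'" "j' < d" and eq: "tau d j = tau d j'"
  have "tau d j $$ (j',j') = 0" using jj by (simp add: tau_index)
  moreover have "tau d j' $$ (j',j') \<noteq> 0" using jj by (simp add: tau_index)
  ultimately show False using eq by simp
qed

lemma re_inv_nat: "Re (1 / (1 + complex_of_nat j)) = 1 / (1 + real j)"
proof -
  have e: "1 + complex_of_nat j = complex_of_real (1 + real j)" by simp
  show ?thesis by (simp only: e Re_divide_of_real) simp
qed

lemma uniqueness: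
  fixes P :: "complex mat \<Rightarrow> complex mat"
  assumes props: "characterizing_props d E P"
    and E: "\<And>i j. i < j \<Longrightarrow> j < d \<Longrightarrow> E i < E j"
  shows "\<forall>\<rho> \<in> carrier_mat d d. P \<rho> = Pi_ch d \<rho>"
proof -
  have Pc: "\<forall>A \<in> carrier_mat d d. P A \<in> carrier_mat d d"
    and AB: "\<forall>\<rho> \<in> states d. P \<rho> \<in> passive_states d"
    and img: "P ` states d = passive_states d"
    and en: "\<And>i j. i \<le> j \<Longrightarrow> j < d \<Longrightarrow>
        Re (trace (hamiltonian d E * P (proj d i))) \<le> Re (trace (hamiltonian d E * P (proj d j)))"
    using props unfolding characterizing_props_def quantum_channel_def activity_breaking_def by auto
  define \<sigma> where "\<sigma> i = P (proj d i)" for i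
  have \<sigma>p: "\<sigma> i \<in> passive_states d" if "i < d" for i
    using AB proj_state[OF that] by (simp add: \<sigma>_def)
  have \<sigma>s: "\<sigma> i \<in> states d" if "i < d" for i using passive_state[OF \<sigma>p[OF that]] .
  have \<sigma>c: "\<sigma> i \<in> carrier_mat d d" if "i < d" for i using state_carrier[OF \<sigma>s[OF that]] .
  have exist: "\<exists>i<d. \<sigma> i = tau d j" if j: "j < d" for j
  proof -
    obtain \<rho> where r: "\<rho> \<in> states d" and Pr: "P \<rho> = tau d j"
      using tau_passive[OF j] img by (metis imageE)
    have rc: "\<rho> \<in> carrier_mat d d" by (rule state_carrier[OF r])
    define s where "s i x = Re (\<sigma> i $$ (x,x))" for i x
    define l where "l i = Re (\<rho> $$ (i,i))" for i
    have \<sigma>nn: "0 \<le> \<sigma> i $$ (x,x)" if "i < d" "x < d" for i x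
      using state_diag_nonneg[OF \<sigma>s[OF that(1)] that(2)] .
    have rnn: "0 \<le> \<rho> $$ (i,i)" if "i < d" for i using state_diag_nonneg[OF r that] .
    have "\<exists>i<d. \<forall>x<d. s i x = (if x \<le> j then 1 / real (j+1) else 0)"
    proof (rule extremal)
      show "0 \<le> s i x" if "i < d" "x < d" for i x
        using \<sigma>nn[OF that] by (simp add: s_def less_eq_complex_def)
      show "(\<Sum>x<d. s i x) = 1" if "i < d" for i
      proof -
        have "trace (\<sigma> i) = 1" using \<sigma>s[OF that] by (simp add: states_def)
        then have "Re (\<Sum>x<d. \<sigma> i $$ (x,x)) = 1" using \<sigma>c[OF that] by (simp add: trace_def)
        then show ?thesis by (simp add: s_def)
      qed
      show "s i y \<le> s i x" if "i < d" "x \<le> y" "y < d" for i x y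
        using \<sigma>p[OF that(1)] that(2,3) by (simp add: s_def passive_states_def)
      show "0 \<le> l i" if "i < d" for i using rnn[OF that] by (simp add: l_def less_eq_complex_def)
      show "(\<Sum>i<d. l i) = 1"
      proof -
        have "trace \<rho> = 1" using r by (simp add: states_def)
        then have "Re (\<Sum>x<d. \<rho> $$ (x,x)) = 1" using rc by (simp add: trace_def)
        then show ?thesis by (simp add: l_def)
      qed
      show "j < d" by fact
      show "(\<Sum>i<d. l i * s i x) = (if x \<le> j then 1 / real (j+1) else 0)" if x: "x < d" for x
      proof -
        have "tau d j $$ (x,x) = (\<Sum>i<d. \<rho> $$ (i,i) * \<sigma> i $$ (x,x))"
          unfolding Pr[symmetric] \<sigma>_def by (rule diag_expand[OF props E rc x x])
        also have "\<dots> = (\<Sum>i<d. complex_of_real (l i * s i x))"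
        proof (rule sum.cong[OF refl])
          fix i assume "i \<in> {..<d}"
          then have i: "i < d" by simp
          have "\<rho> $$ (i,i) = complex_of_real (l i)" unfolding l_def by (rule nonneg_real[OF rnn[OF i]])
          moreover have "\<sigma> i $$ (x,x) = complex_of_real (s i x)" unfolding s_def by (rule nonneg_real[OF \<sigma>nn[OF i x]])
          ultimately show "\<rho> $$ (i,i) * \<sigma> i $$ (x,x) = complex_of_real (l i * s i x)" by simp
        qed
        finally have "Re (tau d j $$ (x,x)) = (\<Sum>i<d. l i * s i x)" by simp
        moreover have "Re (tau d j $$ (x,x)) = (if x \<le> j then 1 / real (j+1) else 0)"
          using x by (cases "x \<le> j") (simp_all add: tau_index re_inv_nat)
        ultimately show ?thesis by simp
      qed
    qed
    then obtain i where i: "i < d" and si: "\<forall>x<d. s i x = (if x \<le> j then 1 / real (j+1) else 0)" by blast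
    have "\<sigma> i = tau d j"
    proof (rule eq_matI)
      fix x y assume "x < dim_row (tau d j)" "y < dim_col (tau d j)"
      then have xy: "x < d" "y < d" by simp_all
      show "\<sigma> i $$ (x,y) = tau d j $$ (x,y)"
      proof (cases "x = y")
        case True
        have "\<sigma> i $$ (x,x) = complex_of_real (s i x)" unfolding s_def by (rule nonneg_real[OF \<sigma>nn[OF i xy(1)]])
        then show ?thesis using True si xy by (simp add: tau_index)
      next
        case False
        then show ?thesis using passive_diag[OF \<sigma>p[OF i]] xy by (simp add: diagm_def tau_index)
      qed
    qed (use \<sigma>c[OF i] in auto)
    then show ?thesis using i by blast
  qed
  define f where "f j = (SOME i. i < d \<and> \<sigma> i = tau d j)" for j
  have f: "f j < d \<and> \<sigma> (f j) = tau d j" if "j < d" for j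
    unfolding f_def using someI_ex[OF exist[OF that]] by simp
  have fmono: "f j < f j'" if jj: "j < j'" "j' < d" for j j'
  proof (rule ccontr)
    assume "\<not> f j < f j'"
    then have le: "f j' \<le> f j" by simp
    have fj: "f j < d" "\<sigma> (f j) = tau d j" using f jj by auto
    have fj': "f j' < d" "\<sigma> (f j') = tau d j'" using f jj by auto
    show False
    proof (cases "f j' = f j")
      case True
      then have "tau d j = tau d j'" using fj fj' by simp
      then show False using tau_distinct[OF jj] by simp
    next
      case False
      have "Re (trace (hamiltonian d E * \<sigma> (f j'))) \<le> Re (trace (hamiltonian d E * \<sigma> (f j)))"
        unfolding \<sigma>_def by (rule en) (use le fj in auto)
      then have "avgE E j' \<le> avgE E j" using fj fj' jj by (simp add: energy_tau)
      moreover have "avgE E j < avgE E j'" by (rule avgE_strict[OF E jj])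
      ultimately show False by simp
    qed
  qed
  have \<sigma>tau: "\<sigma> j = tau d j" if j: "j < d" for j
  proof -
    have "f j = j" by (rule smono_id[of d f]) (use fmono f j in auto)
    then show ?thesis using f[OF j] by simp
  qed
  show ?thesis
  proof
    fix \<rho> :: "complex mat" assume rc: "\<rho> \<in> carrier_mat d d"
    have Prc: "P \<rho> \<in> carrier_mat d d" using Pc rc by blast
    show "P \<rho> = Pi_ch d \<rho>"
    proof (rule eq_matI)
      fix x y assume "x < dim_row (Pi_ch d \<rho>)" "y < dim_col (Pi_ch d \<rho>)"
      then have xy: "x < d" "y < d" by simp_all
      have "P \<rho> $$ (x,y) = (\<Sum>i<d. \<rho> $$ (i,i) * \<sigma> i $$ (x,y))"
        unfolding \<sigma>_def by (rule diag_expand[OF props E rc xy])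
      also have "\<dots> = (\<Sum>i<d. \<rho> $$ (i,i) * tau d i $$ (x,y))"
        by (intro sum.cong refl) (simp add: \<sigma>tau)
      also have "\<dots> = Pi_ch d \<rho> $$ (x,y)"
        using xy by (simp add: Pi_ch_def matsum_index)
      finally show "P \<rho> $$ (x,y) = Pi_ch d \<rho> $$ (x,y)" .
    qed (use Prc in auto)
  qed
qed

theorem mainTheorem18:
  fixes d :: nat and E :: "nat \<Rightarrow> real"
  assumes "d \<ge> 1"
    and "\<And>i j. i < j \<Longrightarrow> j < d \<Longrightarrow> E i < E j"
  shows "characterizing_props d E (Pi_ch d) \<and>
         (\<forall>P. characterizing_props d E P \<longrightarrow> (\<forall>\<rho> \<in> carrier_mat d d. P \<rho> = Pi_ch d \<rho>))"
proof (intro conjI allI impI)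
  show "characterizing_props d E (Pi_ch d)" by (rule Pi_props[OF assms(2)])
  fix P :: "complex mat \<Rightarrow> complex mat" assume "characterizing_props d E P"
  then show "\<forall>\<rho> \<in> carrier_mat d d. P \<rho> = Pi_ch d \<rho>" by (rule uniqueness[OF _ assms(2)])
qed

end
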